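(* For every $k\in\mathbb N$, \[ xC_{k+1}=\frac{x\star(xC_ky)-(xC_ky)\star x}{q-q^{-1}},\qquad C_{k+1}y=\frac{(xC_ky)\star y-y\star(xC_ky)}{q-q^{-1}}, \] where $xC_{k+1}$, $C_{k+1}y$, $xC_ky$ denote free (concatenation) products in $\mathbb V$.
   Context: $\mathbb F$ is a field of characteristic zero and $q\in\mathbb F$ is nonzero and not a root of unity; $[n]_q=(q^n-q^{-n})/(q-q^{-1})$. $\mathbb V$ is the free algebra on noncommuting letters $x,y$; a word is a product of letters (the empty word is $1$), and words form a basis. The $q$-shuffle product $\star$ on $\mathbb V$ is the bilinear product with $1\star v=v\star 1=v$ and, for nontrivial words $u=u_1\cdots u_r$, $v=v_1\cdots v_s$ (letters $u_i,v_j$), $u\star v=u_1\bigl((u_2\cdots u_r)\star v\bigr)+v_1\bigl(u\star(v_2\cdots v_s)\bigr)q^{(u_1,v_1)+(u_2,v_1)+\cdots+(u_r,v_1)}$, where juxtaposition is concatenation and $(x,x)=(y,y)=2$, $(x,y)=(y,x)=-2$. Set $\overline x=1$, $\overline y=-1$. A word $u_1\cdots u_n$ is Catalan if $\overline u_1+\cdots+\overline u_i\ge0$ for $1\le i\le n-1$ and $=0$ for $i=n$. For $n\in\mathbb N$, $C_n=\sum u_1u_2\cdots u_{2n}\,[1]_q[1+\overline u_1]_q[1+\overline u_1+\overline u_2]_q\cdots[1+\overline u_1+\cdots+\overline u_{2n}]_q$, summed over all Catalan words of length $2n$ (so $C_0=1$). *)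

theory Defs
  imports Main
begin

text \<open>An element of V is represented by its coefficient function on words
  (elements of V are those with finite support; all operations below
  only use finitely many coefficients per output word).\<close>

datatype letter = X | Y

type_synonym word = "letter list"

definition pair :: "letter \<Rightarrow> letter \<Rightarrow> int" where
  "pair a b = (if a = b then 2 else -2)"

definition wd :: "word \<Rightarrow> word \<Rightarrow> 'a::field" where
  "wd u = (\<lambda>w. if w = u then 1 else 0)"

definition prep :: "letter \<Rightarrow> (word \<Rightarrow> 'a::field) \<Rightarrow> word \<Rightarrow> 'a" where
  "prep a f w = (case w of [] \<Rightarrow> 0 | c # w' \<Rightarrow> if c = a then f w' else 0)"

fun qsh :: "'a::field \<Rightarrow> word \<Rightarrow> word \<Rightarrow> word \<Rightarrow> 'a" where
  "qsh q [] v = wd v"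
| "qsh q (a # u) [] = wd (a # u)"
| "qsh q (a # u) (b # v) =
     (\<lambda>w. prep a (qsh q u (b # v)) w
        + q powi (pair a b + sum_list (map (\<lambda>c. pair c b) u)) * prep b (qsh q (a # u) v) w)"

text \<open>Bilinear extension: q-shuffle product on V.  Only pairs of words whose
  lengths add up to the length of w can contribute to the coefficient of w.\<close>
definition qshuffle :: "'a::field \<Rightarrow> (word \<Rightarrow> 'a) \<Rightarrow> (word \<Rightarrow> 'a) \<Rightarrow> word \<Rightarrow> 'a" where
  "qshuffle q f g w =
     (\<Sum>(u, v) \<in> {(u, v). length u + length v = length w}. f u * g v * qsh q u v w)"

definition conc :: "(word \<Rightarrow> 'a::field) \<Rightarrow> (word \<Rightarrow> 'a) \<Rightarrow> word \<Rightarrow> 'a" where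
  "conc f g w = (\<Sum>i\<le>length w. f (take i w) * g (drop i w))"

definition bar :: "letter \<Rightarrow> int" where
  "bar a = (if a = X then 1 else -1)"

definition psum :: "word \<Rightarrow> nat \<Rightarrow> int" where
  "psum w i = sum_list (map bar (take i w))"

definition catalan :: "word \<Rightarrow> bool" where
  "catalan w \<longleftrightarrow> (\<forall>i. 1 \<le> i \<and> i \<le> length w - 1 \<longrightarrow> psum w i \<ge> 0) \<and> psum w (length w) = 0"

definition qint :: "'a::field \<Rightarrow> int \<Rightarrow> 'a" where
  "qint q n = (q powi n - q powi (- n)) / (q - inverse q)"

definition Cn :: "'a::field \<Rightarrow> nat \<Rightarrow> word \<Rightarrow> 'a" where
  "Cn q n w = (if length w = 2 * n \<and> catalan w
                then (\<Prod>i = 0..2 * n. qint q (1 + psum w i)) else 0)"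

end

theory Submission
  imports Defs
begin

instance letter :: finite
proof
  have "(UNIV :: letter set) = {X, Y}" using letter.exhaust by auto
  then show "finite (UNIV :: letter set)" by (metis finite.emptyI finite.insertI)
qed

definition tot :: "word \<Rightarrow> int" where "tot v = sum_list (map bar v)"
definition ins :: "nat \<Rightarrow> letter \<Rightarrow> word \<Rightarrow> word" where "ins i a v = take i v @ a # drop i v"
definition del :: "nat \<Rightarrow> word \<Rightarrow> word" where "del i w = take i w @ drop (Suc i) w"
definition Pr :: "'a::field \<Rightarrow> int \<Rightarrow> word \<Rightarrow> 'a" where
  "Pr q c v = (\<Prod>i = 0..length v. qint q (c + psum v i))"

lemma pair_bar: "pair a c = 2 * bar a * bar c"
  by (cases a; cases c) (simp_all add: pair_def bar_def)

lemma pairX: "sum_list (map (pair X) l) = 2 * sum_list (map bar l)"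
  by (induction l) (simp_all add: pair_bar bar_def algebra_simps)
lemma pairX': "sum_list (map (\<lambda>c. pair c X) l) = 2 * sum_list (map bar l)"
  by (induction l) (simp_all add: pair_bar bar_def algebra_simps)
lemma pairY: "sum_list (map (pair Y) l) = - 2 * sum_list (map bar l)"
  by (induction l) (simp_all add: pair_bar bar_def algebra_simps)
lemma pairY': "sum_list (map (\<lambda>c. pair c Y) l) = - 2 * sum_list (map bar l)"
  by (induction l) (simp_all add: pair_bar bar_def algebra_simps)

lemma psum_drop: "sum_list (map bar (drop i v)) = tot v - psum v i"
  unfolding tot_def psum_def by (metis add_diff_cancel_left' append_take_drop_id map_append sum_list_append)

lemma psum_len: "psum v (length v) = tot v" by (simp add: psum_def tot_def)

lemma psum_Suc: "psum w (Suc i) = psum w i + (if i < length w then bar (w!i) else 0)"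
  by (simp add: psum_def take_Suc_conv_app_nth)

lemma psum_Cons_Suc: "psum (a # w) (Suc i) = bar a + psum w i"
  by (simp add: psum_def)
lemma psum_0[simp]: "psum w 0 = 0" by (simp add: psum_def)
lemma psum_app: "i \<le> length s \<Longrightarrow> psum (s @ t) i = psum s i"
  by (simp add: psum_def)

lemma qint0[simp]: "qint q 0 = 0" by (simp add: qint_def)

lemma aux_div:
  fixes z :: "'a::field"
  assumes "z \<noteq> 0" "A*(B-C) = D*z"
  shows "A/z*(B/z) - A/z*(C/z) = D/z"
proof -
  have "A/z*(B/z) - A/z*(C/z) = (A*(B-C))/(z*z)" by (simp add: right_diff_distrib diff_divide_distrib)
  also have "\<dots> = D/z" using assms by simp
  finally show ?thesis .
qed

lemma qint_id:
  fixes q :: "'a::field"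
  assumes q0: "q \<noteq> 0" and q1: "q - inverse q \<noteq> 0"
  shows "qint q (b+1) * qint q (b+2) - qint q (b+1) * qint q b = qint q (2*b+2)"
proof -
  define a where "a = q powi b"
  have a0: "a \<noteq> 0" using q0 by (simp add: a_def)
  have pa: "\<And>m n. q powi (m + n) = q powi m * q powi n" using q0 by (simp add: power_int_add)
  have i1: "q powi (-1) = inverse q" by (simp add: power_int_minus)
  have e1: "q powi (b+1) = a*q" by (simp add: pa a_def)
  have e2: "q powi (b+2) = a*q*q" by (simp add: pa[of b 2] a_def power2_eq_square)
  have e3: "q powi (-(b+1)) = inverse a * inverse q"
    using pa[of "-b" "-1"] i1 by (simp add: a_def power_int_minus)
  have e4: "q powi (-(b+2)) = inverse a * inverse q * inverse q"
    using pa[of "-b" "-2"] by (simp add: a_def power_int_minus power2_eq_square)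
  have e0: "q powi b = a" by (simp add: a_def)
  have e5: "q powi (-b) = inverse a" by (simp add: a_def power_int_minus)
  have e6: "q powi (2*b+2) = a*a*q*q"
    using pa[of "2*b" 2] pa[of b b] by (simp add: a_def power2_eq_square mult_ac mult_2)
  have e7: "q powi (-(2*b+2)) = inverse (a*a*q*q)" using e6 power_int_minus[of q "2*b+2"] by metis
  define ai where "ai = inverse a"
  define qi where "qi = inverse q"
  have r1: "a * ai = 1" using a0 by (simp add: ai_def)
  have r2: "q * qi = 1" using q0 by (simp add: qi_def)
  have key: "(a*q - ai*qi) * ((a*q*q - ai*qi*qi) - (a - ai)) = (a*a*q*q - ai*ai*qi*qi) * (q - qi)"
    using r1 r2 by algebra
  have e7': "inverse (a*a*q*q) = ai*ai*qi*qi" by (simp add: ai_def qi_def)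
  show ?thesis unfolding qint_def e0 e1 e2 e3 e4 e5 e6 e7 minus_add_distrib[symmetric] e7'
    unfolding ai_def[symmetric] qi_def[symmetric]
    by (rule aux_div[OF q1[unfolded qi_def[symmetric]]]) (use key in \<open>simp add: algebra_simps\<close>)
qed

lemma conc_wd_left: "conc (wd [a]) f w = prep a f w"
proof (cases w)
  case Nil thus ?thesis by (simp add: conc_def wd_def prep_def)
next
  case (Cons c r)
  have "conc (wd [a]) f w = (\<Sum>i\<le>Suc (length r). wd [a] (take i (c#r)) * f (drop i (c#r)))"
    by (simp add: conc_def Cons)
  also have "\<dots> = wd [a] [] * f (c#r) + (\<Sum>i\<le>length r. wd [a] (c # take i r) * f (drop i r))"
    by (subst sum.atMost_Suc_shift) simp
  also have "(\<Sum>i\<le>length r. wd [a] (c # take i r) * f (drop i r)) = (if c = a then f r else 0)"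
  proof -
    have "(\<Sum>i\<le>length r. wd [a] (c # take i r) * f (drop i r))
        = (\<Sum>i\<le>length r. if i = 0 then (if c = a then f r else 0) else 0)"
      by (rule sum.cong) (auto simp: wd_def)
    thus ?thesis by simp
  qed
  finally show ?thesis by (simp add: wd_def prep_def Cons)
qed

lemma conc_wd_right: "conc f (wd [a]) w = (if w \<noteq> [] \<and> last w = a then f (butlast w) else 0)"
proof (cases w rule: rev_cases)
  case Nil thus ?thesis by (simp add: conc_def wd_def)
next
  case (snoc r c)
  have "conc f (wd [a]) w = (\<Sum>i\<le>Suc (length r). f (take i (r@[c])) * wd [a] (drop i (r@[c])))"
    by (simp add: conc_def snoc)
  also have "\<dots> = (\<Sum>i\<le>length r. f (take i (r@[c])) * wd [a] (drop i (r@[c])))"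
    by (simp add: wd_def)
  also have "\<dots> = (\<Sum>i\<le>length r. if i = length r then (if c = a then f r else 0) else 0)"
    by (rule sum.cong) (auto simp: wd_def)
  finally show ?thesis by (simp add: snoc)
qed

lemma prep_sum: "prep b (\<lambda>w. \<Sum>i\<in>I. if w = u i then f i else 0) w = (\<Sum>i\<in>I. if w = b # u i then f i else 0)"
  by (cases w) (auto simp: prep_def)

lemma prep_wd: "prep b (wd v) w = (if w = b # v then 1 else 0)"
  by (cases w) (auto simp: prep_def wd_def)

lemma qsh_left:
  fixes q :: "'a::field"
  assumes q0: "q \<noteq> 0"
  shows "qsh q [a] v w = (\<Sum>i\<le>length v. if w = ins i a v then q powi (sum_list (map (pair a) (take i v))) else 0)"
proof (induction v arbitrary: w)
  case Nil thus ?case by (simp add: ins_def wd_def)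
next
  case (Cons b v)
  have "qsh q [a] (b # v) w = prep a (wd (b # v)) w + q powi (pair a b) * prep b (qsh q [a] v) w"
    by simp
  also have "prep b (qsh q [a] v) w = (\<Sum>i\<le>length v. if w = b # ins i a v then q powi (sum_list (map (pair a) (take i v))) else 0)"
    using Cons.IH prep_sum[of b "\<lambda>i. ins i a v" "\<lambda>i. q powi (sum_list (map (pair a) (take i v)))" "{..length v}" w]
    by (metis (no_types, lifting) ext)
  finally have 1: "qsh q [a] (b # v) w = (if w = a # b # v then 1 else 0) + (\<Sum>i\<le>length v. if w = b # ins i a v then q powi (pair a b) * q powi (sum_list (map (pair a) (take i v))) else 0)"
    by (simp add: prep_wd sum_distrib_left if_distrib cong: if_cong)
  show ?case unfolding 1 length_Cons
    by (subst sum.atMost_Suc_shift) (simp add: ins_def power_int_add q0 take_Suc_Cons del: take_Suc cong: if_cong)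
qed

lemma qsh_right:
  fixes q :: "'a::field"
  shows "qsh q v [a] w = (\<Sum>i\<le>length v. if w = ins i a v then q powi (sum_list (map (\<lambda>c. pair c a) (drop i v))) else 0)"
proof (induction v arbitrary: w)
  case Nil thus ?case by (simp add: ins_def wd_def)
next
  case (Cons b v)
  have "qsh q (b # v) [a] w = prep b (qsh q v [a]) w + q powi (pair b a + sum_list (map (\<lambda>c. pair c a) v)) * prep a (wd (b # v)) w"
    by simp
  also have "prep b (qsh q v [a]) w = (\<Sum>i\<le>length v. if w = b # ins i a v then q powi (sum_list (map (\<lambda>c. pair c a) (drop i v))) else 0)"
    using Cons.IH prep_sum[of b "\<lambda>i. ins i a v" "\<lambda>i. q powi (sum_list (map (\<lambda>c. pair c a) (drop i v)))" "{..length v}" w]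
    by (metis (no_types, lifting) ext)
  finally have 1: "qsh q (b # v) [a] w = (\<Sum>i\<le>length v. if w = b # ins i a v then q powi (sum_list (map (\<lambda>c. pair c a) (drop i v))) else 0) + (if w = a # b # v then q powi (pair b a + sum_list (map (\<lambda>c. pair c a) v)) else 0)"
    by (simp add: prep_wd)
  show ?case unfolding 1 length_Cons
    by (subst sum.atMost_Suc_shift) (simp add: ins_def drop_Suc_Cons del: drop_Suc cong: if_cong)
qed

lemma finite_S: "finite {(u::word, v::word). length u + length v = n}"
proof -
  have "{(u::word, v::word). length u + length v = n} \<subseteq> {u. set u \<subseteq> UNIV \<and> length u \<le> n} \<times> {v. set v \<subseteq> UNIV \<and> length v \<le> n}"
    by auto
  moreover have "finite ({u::word. set u \<subseteq> UNIV \<and> length u \<le> n} \<times> {v::word. set v \<subseteq> UNIV \<and> length v \<le> n})"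
    by (intro finite_cartesian_product finite_lists_length_le) simp_all
  ultimately show ?thesis by (rule finite_subset)
qed

lemma finite_V: "finite {v::word. Suc (length v) = n}"
proof -
  have "{v::word. Suc (length v) = n} \<subseteq> {v. set v \<subseteq> UNIV \<and> length v \<le> n}" by auto
  thus ?thesis by (rule finite_subset) (intro finite_lists_length_le, simp)
qed

lemma qshuffle_left:
  "qshuffle q (wd [a]) g w = (\<Sum>v\<in>{v. Suc (length v) = length w}. g v * qsh q [a] v w)"
proof -
  let ?S = "{(u::word, v::word). length u + length v = length w}"
  let ?V = "{v::word. Suc (length v) = length w}"
  let ?F = "\<lambda>(u,v). wd [a] u * g v * qsh q u v w"
  have "qshuffle q (wd [a]) g w = sum ?F ?S" by (simp add: qshuffle_def)
  also have "\<dots> = sum ?F ((\<lambda>v. ([a], v)) ` ?V)"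
    by (rule sum.mono_neutral_right[OF finite_S]) (auto simp: wd_def)
  also have "\<dots> = (\<Sum>v\<in>?V. ?F ([a], v))"
    by (simp add: sum.reindex inj_on_def)
  finally show ?thesis by (simp add: wd_def)
qed

lemma qshuffle_right:
  "qshuffle q g (wd [a]) w = (\<Sum>v\<in>{v. Suc (length v) = length w}. g v * qsh q v [a] w)"
proof -
  let ?S = "{(u::word, v::word). length u + length v = length w}"
  let ?V = "{v::word. Suc (length v) = length w}"
  let ?F = "\<lambda>(u,v). g u * wd [a] v * qsh q u v w"
  have "qshuffle q g (wd [a]) w = sum ?F ?S" by (simp add: qshuffle_def)
  also have "\<dots> = sum ?F ((\<lambda>v. (v, [a])) ` ?V)"
    by (rule sum.mono_neutral_right[OF finite_S]) (auto simp: wd_def)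
  also have "\<dots> = (\<Sum>v\<in>?V. ?F (v, [a]))"
    by (simp add: sum.reindex inj_on_def)
  finally show ?thesis by (simp add: wd_def)
qed

lemma ins_del_iff:
  assumes "i < length w" "Suc (length v) = length w"
  shows "(w = ins i a v) \<longleftrightarrow> (w ! i = a \<and> v = del i w)"
proof
  assume h: "w = ins i a v"
  have "i \<le> length v" using assms by simp
  thus "w ! i = a \<and> v = del i w" using h
    by (simp add: ins_def del_def nth_append min_def)
next
  assume h: "w ! i = a \<and> v = del i w"
  hence "w ! i = a" "v = del i w" by auto
  moreover have "take i (del i w) = take i w" "drop i (del i w) = drop (Suc i) w"
    using assms(1) by (simp_all add: del_def)
  ultimately show "w = ins i a v" using id_take_nth_drop[OF assms(1)]
    by (simp add: ins_def)
qed

lemma length_del: "i < length w \<Longrightarrow> Suc (length (del i w)) = length w"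
  by (simp add: del_def)

lemma swap_sum:
  fixes g :: "word \<Rightarrow> 'a::field"
  shows "(\<Sum>v\<in>{v. Suc (length v) = length w}. g v * (\<Sum>i\<le>length v. if w = ins i a v then c v i else 0))
   = (\<Sum>i<length w. if w ! i = a then g (del i w) * c (del i w) i else 0)"
proof -
  let ?V = "{v::word. Suc (length v) = length w}"
  have "(\<Sum>v\<in>?V. g v * (\<Sum>i\<le>length v. if w = ins i a v then c v i else 0))
      = (\<Sum>v\<in>?V. \<Sum>i<length w. if w = ins i a v then g v * c v i else 0)"
  proof (rule sum.cong[OF refl])
    fix v assume "v \<in> ?V"
    hence e: "{..length v} = {..<length w}" by auto
    show "g v * (\<Sum>i\<le>length v. if w = ins i a v then c v i else 0) = (\<Sum>i<length w. if w = ins i a v then g v * c v i else 0)"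
      unfolding e by (subst sum_distrib_left) (intro sum.cong refl, simp)
  qed
  also have "\<dots> = (\<Sum>i<length w. \<Sum>v\<in>?V. if w = ins i a v then g v * c v i else 0)"
    by (rule sum.swap)
  also have "\<dots> = (\<Sum>i<length w. if w ! i = a then g (del i w) * c (del i w) i else 0)"
  proof (rule sum.cong[OF refl])
    fix i assume i: "i \<in> {..<length w}"
    have "(\<Sum>v\<in>?V. if w = ins i a v then g v * c v i else 0)
        = (\<Sum>v\<in>?V. if v = del i w then (if w ! i = a then g v * c v i else 0) else 0)"
    proof (rule sum.cong[OF refl])
      fix v assume "v \<in> ?V"
      hence "(w = ins i a v) \<longleftrightarrow> (w ! i = a \<and> v = del i w)"
        using ins_del_iff[of i w v a] i by simp
      thus "(if w = ins i a v then g v * c v i else 0) = (if v = del i w then (if w ! i = a then g v * c v i else 0) else 0)"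
        by simp
    qed
    also have "\<dots> = (if w ! i = a then g (del i w) * c (del i w) i else 0)"
      using finite_V length_del[of i w] i by (simp add: sum.delta')
    finally show "(\<Sum>v\<in>?V. if w = ins i a v then g v * c v i else 0) = (if w ! i = a then g (del i w) * c (del i w) i else 0)" .
  qed
  finally show ?thesis .
qed

lemma qsh_left_sum:
  fixes q :: "'a::field" and g :: "word \<Rightarrow> 'a"
  assumes "q \<noteq> 0"
  shows "qshuffle q (wd [a]) g w = (\<Sum>i<length w. if w ! i = a then g (del i w) * q powi (sum_list (map (pair a) (take i (del i w)))) else 0)"
  unfolding qshuffle_left qsh_left[OF assms] by (rule swap_sum)

lemma qsh_right_sum:
  fixes q :: "'a::field" and g :: "word \<Rightarrow> 'a"
  shows "qshuffle q g (wd [a]) w = (\<Sum>i<length w. if w ! i = a then g (del i w) * q powi (sum_list (map (\<lambda>c. pair c a) (drop i (del i w)))) else 0)"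
  unfolding qshuffle_right qsh_right by (rule swap_sum)

definition G :: "'a::field \<Rightarrow> nat \<Rightarrow> word \<Rightarrow> 'a" where
  "G q k = conc (wd [X]) (conc (Cn q k) (wd [Y]))"

lemma G_char: "G q k v = prep X (\<lambda>r. if r \<noteq> [] \<and> last r = Y then Cn q k (butlast r) else 0) v"
proof -
  have "conc (Cn q k) (wd [Y]) = (\<lambda>r. if r \<noteq> [] \<and> last r = Y then Cn q k (butlast r) else 0)"
    by (rule ext) (rule conc_wd_right)
  thus ?thesis by (simp add: G_def conc_wd_left)
qed

lemma G_Cons: "G q k (X # t @ [Y]) = Cn q k t"
  by (simp add: G_char prep_def)

lemma Cn_nz: "Cn q k t \<noteq> 0 \<Longrightarrow> tot t = 0 \<and> length t = 2 * k \<and> catalan t"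
proof -
  assume h: "Cn q k t \<noteq> 0"
  hence "length t = 2 * k \<and> catalan t" unfolding Cn_def by metis
  thus ?thesis unfolding catalan_def using psum_len[of t] by auto
qed

lemma G_tot: assumes "G q k v \<noteq> 0" shows "tot v = 0"
proof -
  obtain r where v: "v = X # r" and r: "r \<noteq> []" "last r = Y" and c: "Cn q k (butlast r) \<noteq> 0"
    using assms by (auto simp: G_char prep_def split: list.splits if_splits)
  have "r = butlast r @ [Y]" using r by (metis append_butlast_last_id)
  hence "v = X # butlast r @ [Y]" using v by simp
  hence "tot v = 1 + tot (butlast r) - 1" unfolding tot_def by (simp add: bar_def)
  thus ?thesis using Cn_nz[OF c] by simp
qed

lemma take_del: "i < length w \<Longrightarrow> take i (del i w) = take i w"
  by (simp add: del_def)

lemma RHS1: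
  fixes q :: "'a::field"
  assumes q0: "q \<noteq> 0" and z: "q - inverse q \<noteq> 0"
  shows "(qshuffle q (wd [X]) (G q k) w - qshuffle q (G q k) (wd [X]) w) / (q - inverse q)
       = (\<Sum>i<length w. if w ! i = X then G q k (del i w) * qint q (2 * psum w i) else 0)"
  unfolding qsh_left_sum[OF q0] qsh_right_sum sum_subtractf[symmetric] sum_divide_distrib
proof (rule sum.cong[OF refl])
  fix i assume i: "i \<in> {..<length w}"
  define d where "d = del i w"
  have p: "psum d i = psum w i" using take_del[of i w] i by (simp add: d_def psum_def)
  show "((if w ! i = X then G q k (del i w) * q powi sum_list (map (pair X) (take i (del i w))) else 0) -
          (if w ! i = X then G q k (del i w) * q powi sum_list (map (\<lambda>c. pair c X) (drop i (del i w))) else 0)) / (q - inverse q) =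
         (if w ! i = X then G q k (del i w) * qint q (2 * psum w i) else 0)"
  proof (cases "w ! i = X \<and> G q k d \<noteq> 0")
    case True
    hence t: "tot d = 0" using G_tot by blast
    have e1: "sum_list (map (pair X) (take i d)) = 2 * psum w i"
      using p by (simp add: pairX psum_def)
    have e2: "sum_list (map (\<lambda>c. pair c X) (drop i d)) = - (2 * psum w i)"
      using p t by (simp add: pairX' psum_drop)
    show ?thesis using True e1 e2 unfolding d_def by (simp add: qint_def right_diff_distrib[symmetric])
  next
    case False thus ?thesis by (auto simp: d_def)
  qed
qed

lemma RHS2:
  fixes q :: "'a::field"
  assumes q0: "q \<noteq> 0" and z: "q - inverse q \<noteq> 0"
  shows "(qshuffle q (G q k) (wd [Y]) w - qshuffle q (wd [Y]) (G q k) w) / (q - inverse q)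
       = (\<Sum>i<length w. if w ! i = Y then G q k (del i w) * qint q (2 * psum w i) else 0)"
  unfolding qsh_left_sum[OF q0] qsh_right_sum sum_subtractf[symmetric] sum_divide_distrib
proof (rule sum.cong[OF refl])
  fix i assume i: "i \<in> {..<length w}"
  define d where "d = del i w"
  have p: "psum d i = psum w i" using take_del[of i w] i by (simp add: d_def psum_def)
  show "((if w ! i = Y then G q k (del i w) * q powi sum_list (map (\<lambda>c. pair c Y) (drop i (del i w))) else 0) -
          (if w ! i = Y then G q k (del i w) * q powi sum_list (map (pair Y) (take i (del i w))) else 0)) / (q - inverse q) =
         (if w ! i = Y then G q k (del i w) * qint q (2 * psum w i) else 0)"
  proof (cases "w ! i = Y \<and> G q k d \<noteq> 0")
    case True
    hence t: "tot d = 0" using G_tot by blast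
    have e1: "sum_list (map (pair Y) (take i d)) = - (2 * psum w i)"
      using p by (simp add: pairY psum_def)
    have e2: "sum_list (map (\<lambda>c. pair c Y) (drop i d)) = 2 * psum w i"
      using p t by (simp add: pairY' psum_drop)
    show ?thesis using True e1 e2 unfolding d_def by (simp add: qint_def right_diff_distrib[symmetric])
  next
    case False thus ?thesis by (auto simp: d_def)
  qed
qed

lemma Pr_Nil: "Pr q c [] = qint q c"
  by (simp add: Pr_def)

lemma Pr_snoc: "Pr q c (s @ [a]) = Pr q c s * qint q (c + tot s + bar a)"
proof -
  have "Pr q c (s @ [a]) = (\<Prod>i = 0..Suc (length s). qint q (c + psum (s @ [a]) i))"
    by (simp add: Pr_def)
  also have "\<dots> = (\<Prod>i = 0..length s. qint q (c + psum (s @ [a]) i)) * qint q (c + psum (s @ [a]) (Suc (length s)))"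
    by (rule prod.atLeast0_atMost_Suc)
  also have "(\<Prod>i = 0..length s. qint q (c + psum (s @ [a]) i)) = Pr q c s"
    unfolding Pr_def by (rule prod.cong) (auto simp: psum_app)
  also have "psum (s @ [a]) (Suc (length s)) = tot s + bar a"
    by (simp add: psum_def tot_def)
  finally show ?thesis by (simp add: add.assoc)
qed

lemma Pr_Cons: "Pr q c (a # s) = qint q c * Pr q (c + bar a) s"
proof -
  have "Pr q c (a # s) = (\<Prod>i = 0..Suc (length s). qint q (c + psum (a # s) i))"
    by (simp add: Pr_def)
  also have "\<dots> = qint q (c + psum (a # s) 0) * (\<Prod>i = 0..length s. qint q (c + psum (a # s) (Suc i)))"
    by (simp only: prod.atLeast0_atMost_Suc_shift comp_def)
  finally show ?thesis by (simp add: Pr_def psum_Cons_Suc add.assoc)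
qed

lemma Pr_zero: "i \<le> length v \<Longrightarrow> c + psum v i = 0 \<Longrightarrow> Pr q c v = 0"
  unfolding Pr_def by (rule prod_zero) (auto intro!: bexI[of _ i])

lemma del_snoc: "j < length s \<Longrightarrow> del j (s @ [c]) = del j s @ [c]"
  by (simp add: del_def)

lemma tot_del: "j < length s \<Longrightarrow> tot (del j s) = tot s - bar (s ! j)"
proof -
  assume j: "j < length s"
  have "s = take j s @ s ! j # drop (Suc j) s" using id_take_nth_drop[OF j] .
  hence "tot s = tot (take j s) + bar (s ! j) + tot (drop (Suc j) s)"
    unfolding tot_def by (metis add.assoc list.simps(9) map_append sum_list.Cons sum_list_append)
  thus ?thesis by (simp add: del_def tot_def)
qed

lemma psum_snoc_le: "j \<le> length s \<Longrightarrow> psum (s @ [c]) j = psum s j"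
  by (rule psum_app)

lemma psum_snoc_len: "psum s (length s) = tot s" by (rule psum_len)

lemma core1:
  fixes q :: "'a::field"
  assumes q0: "q \<noteq> 0" and z: "q - inverse q \<noteq> 0"
  shows "(\<Sum>j<length s. if s ! j = X then Pr q 1 (del j s) * qint q (2 + 2 * psum s j) else 0)
         = Pr q 1 s * qint q (tot s)"
proof (induction s rule: rev_induct)
  case Nil thus ?case by (simp add: tot_def)
next
  case (snoc c s)
  define b where "b = tot s"
  define A where "A = Pr q 1 s"
  have old: "(\<Sum>j<length s. if (s @ [c]) ! j = X then Pr q 1 (del j (s @ [c])) * qint q (2 + 2 * psum (s @ [c]) j) else 0)
      = qint q (b + bar c) * (\<Sum>j<length s. if s ! j = X then Pr q 1 (del j s) * qint q (2 + 2 * psum s j) else 0)"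
    unfolding sum_distrib_left
  proof (rule sum.cong[OF refl])
    fix j assume j: "j \<in> {..<length s}"
    show "(if (s @ [c]) ! j = X then Pr q 1 (del j (s @ [c])) * qint q (2 + 2 * psum (s @ [c]) j) else 0) =
          qint q (b + bar c) * (if s ! j = X then Pr q 1 (del j s) * qint q (2 + 2 * psum s j) else 0)"
      using j by (simp add: nth_append del_snoc Pr_snoc tot_del psum_app b_def bar_def)
  qed
  have new: "(if (s @ [c]) ! length s = X then Pr q 1 (del (length s) (s @ [c])) * qint q (2 + 2 * psum (s @ [c]) (length s)) else 0)
       = (if c = X then A * qint q (2 + 2 * b) else 0)"
    by (simp add: del_def A_def b_def psum_app psum_len)
  have "(\<Sum>j<length (s @ [c]). if (s @ [c]) ! j = X then Pr q 1 (del j (s @ [c])) * qint q (2 + 2 * psum (s @ [c]) j) else 0)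
     = qint q (b + bar c) * (A * qint q b) + (if c = X then A * qint q (2 + 2 * b) else 0)"
    using old new snoc.IH by (simp add: A_def b_def)
  also have "\<dots> = Pr q 1 (s @ [c]) * qint q (tot (s @ [c]))"
  proof -
    have P: "Pr q 1 (s @ [c]) = A * qint q (1 + b + bar c)" by (simp add: Pr_snoc A_def b_def)
    have T: "tot (s @ [c]) = b + bar c" by (simp add: b_def tot_def)
    show ?thesis
    proof (cases c)
      case X
      have k: "qint q (b+1) * qint q (b+2) - qint q (b+1) * qint q b = qint q (2*b+2)" by (rule qint_id[OF q0 z])
      have k2: "qint q (b+1) * qint q (b+2) = qint q (b+1) * qint q b + qint q (2*b+2)" using k by (simp add: algebra_simps)
      have "qint q (b + 1) * (A * qint q b) + A * qint q (2 + 2 * b) = A * (qint q (b+1) * qint q (b+2))"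
        unfolding k2 by (simp add: algebra_simps)
      thus ?thesis using X unfolding P T by (simp add: bar_def algebra_simps)
    next
      case Y
      thus ?thesis unfolding P T by (simp add: bar_def algebra_simps)
    qed
  qed
  finally show ?case .
qed

lemma qint1: "q - inverse q \<noteq> 0 \<Longrightarrow> qint q 1 = 1"
  by (simp add: qint_def)

lemma core2:
  fixes q :: "'a::field"
  assumes q0: "q \<noteq> 0" and z: "q - inverse q \<noteq> 0"
  shows "(\<Sum>j<length s. if s ! j = Y then Pr q 1 (del j s) * qint q (2 + 2 * psum s j) else 0)
         = Pr q 2 s - Pr q 1 s * qint q (tot s + 2)"
proof (induction s rule: rev_induct)
  case Nil thus ?case by (simp add: tot_def Pr_Nil qint1[OF z])
next
  case (snoc c s)
  define b where "b = tot s"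
  define A where "A = Pr q 1 s"
  define P2 where "P2 = Pr q 2 s"
  have old: "(\<Sum>j<length s. if (s @ [c]) ! j = Y then Pr q 1 (del j (s @ [c])) * qint q (2 + 2 * psum (s @ [c]) j) else 0)
      = qint q (b + 2 + bar c) * (\<Sum>j<length s. if s ! j = Y then Pr q 1 (del j s) * qint q (2 + 2 * psum s j) else 0)"
    unfolding sum_distrib_left
  proof (rule sum.cong[OF refl])
    fix j assume j: "j \<in> {..<length s}"
    show "(if (s @ [c]) ! j = Y then Pr q 1 (del j (s @ [c])) * qint q (2 + 2 * psum (s @ [c]) j) else 0) =
          qint q (b + 2 + bar c) * (if s ! j = Y then Pr q 1 (del j s) * qint q (2 + 2 * psum s j) else 0)"
      using j by (simp add: nth_append del_snoc Pr_snoc tot_del psum_app b_def bar_def algebra_simps)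
  qed
  have new: "(if (s @ [c]) ! length s = Y then Pr q 1 (del (length s) (s @ [c])) * qint q (2 + 2 * psum (s @ [c]) (length s)) else 0)
       = (if c = Y then A * qint q (2 + 2 * b) else 0)"
    by (simp add: del_def A_def b_def psum_app psum_len)
  have "(\<Sum>j<length (s @ [c]). if (s @ [c]) ! j = Y then Pr q 1 (del j (s @ [c])) * qint q (2 + 2 * psum (s @ [c]) j) else 0)
     = qint q (b + 2 + bar c) * (P2 - A * qint q (b + 2)) + (if c = Y then A * qint q (2 + 2 * b) else 0)"
    using old new snoc.IH by (simp add: A_def b_def P2_def)
  also have "\<dots> = Pr q 2 (s @ [c]) - Pr q 1 (s @ [c]) * qint q (tot (s @ [c]) + 2)"
  proof -
    have P: "Pr q 1 (s @ [c]) = A * qint q (1 + b + bar c)" by (simp add: Pr_snoc A_def b_def)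
    have P': "Pr q 2 (s @ [c]) = P2 * qint q (2 + b + bar c)" by (simp add: Pr_snoc P2_def b_def)
    have T: "tot (s @ [c]) = b + bar c" by (simp add: b_def tot_def)
    show ?thesis
    proof (cases c)
      case X
      thus ?thesis unfolding P P' T by (simp add: bar_def algebra_simps)
    next
      case Y
      have k: "qint q (b+1) * qint q (b+2) - qint q (b+1) * qint q b = qint q (2*b+2)" by (rule qint_id[OF q0 z])
      have k2: "qint q (2+2*b) = qint q (b+1) * qint q (b+2) - qint q (b+1) * qint q b" using k by (simp add: algebra_simps)
      have "qint q (b + 1) * (P2 - A * qint q (b + 2)) + A * qint q (2 + 2 * b) = P2 * qint q (b+1) - A * (qint q b * qint q (b+1))"
        unfolding k2 by (simp add: algebra_simps)
      thus ?thesis using Y unfolding P P' T by (simp add: bar_def algebra_simps)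
    qed
  qed
  finally show ?case .
qed

lemma ivt: "psum v i < 0 \<Longrightarrow> \<exists>j\<le>i. psum v j = -1"
proof (induction i)
  case 0 thus ?case by simp
next
  case (Suc i)
  show ?case
  proof (cases "psum v i < 0")
    case True thus ?thesis using Suc.IH le_Suc_eq by blast
  next
    case False
    have "psum v (Suc i) \<ge> psum v i - 1" by (simp add: psum_Suc bar_def)
    hence "psum v (Suc i) = -1" using False Suc.prems by linarith
    thus ?thesis by blast
  qed
qed

lemma Cn_Pr: "Cn q k t = (if length t = 2 * k \<and> tot t = 0 then Pr q 1 t else 0)"
proof (cases "length t = 2 * k \<and> tot t = 0")
  case True
  show ?thesis
  proof (cases "catalan t")
    case True
    thus ?thesis using \<open>length t = 2 * k \<and> tot t = 0\<close> by (simp add: Cn_def Pr_def)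
  next
    case False
    then obtain i where i: "1 \<le> i" "i \<le> length t - 1" "psum t i < 0"
      using True psum_len[of t] unfolding catalan_def by force
    then obtain j where j: "j \<le> i" "psum t j = -1" using ivt by blast
    have "Pr q 1 t = 0" by (rule Pr_zero[of j]) (use i j in auto)
    thus ?thesis using False by (simp add: Cn_def)
  qed
next
  case False
  thus ?thesis using Cn_nz[of q k t] by auto
qed

lemma G_qint_tot: "G q k d * qint q (2 * tot d) = 0"
proof (cases "G q k d = 0")
  case False thus ?thesis using G_tot[of q k d] by simp
qed simp

lemma del_mid: "j < length s \<Longrightarrow> del (Suc j) (X # s @ [Y]) = X # del j s @ [Y]"
  by (simp add: del_def)
lemma psum_mid: "j \<le> length s \<Longrightarrow> psum (X # s @ [Y]) (Suc j) = 1 + psum s j"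
  by (simp add: psum_Cons_Suc psum_app bar_def)
lemma nth_mid: "j < length s \<Longrightarrow> (X # s @ [Y]) ! Suc j = s ! j"
  by (simp add: nth_append)
lemma last_facts: "(X # s @ [Y]) ! Suc (length s) = Y" "del (Suc (length s)) (X # s @ [Y]) = X # s"
  "psum (X # s @ [Y]) (Suc (length s)) = tot (X # s)"
  by (simp_all add: del_def psum_def tot_def)

lemma sum_mid: "(\<Sum>i<length (X # s @ [Y]). f i) = f 0 + (\<Sum>j<length s. f (Suc j)) + (f (Suc (length s)) :: 'a::comm_monoid_add)"
proof -
  have "(\<Sum>i<length (X # s @ [Y]). f i) = (\<Sum>i<Suc (Suc (length s)). f i)" by simp
  also have "\<dots> = f 0 + (\<Sum>j<Suc (length s). f (Suc j))" by (rule sum.lessThan_Suc_shift)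
  also have "(\<Sum>j<Suc (length s). f (Suc j)) = (\<Sum>j<length s. f (Suc j)) + f (Suc (length s))" by simp
  finally show ?thesis by (simp add: add.assoc)
qed

lemma G_form: assumes "G q k d \<noteq> 0" shows "\<exists>t. d = X # t @ [Y]"
proof -
  obtain r where v: "d = X # r" and r: "r \<noteq> []" "last r = Y"
    using assms by (auto simp: G_char prep_def split: list.splits if_splits)
  have "r = butlast r @ [Y]" using r by (metis append_butlast_last_id)
  thus ?thesis using v by blast
qed

lemma term_zero:
  assumes nf: "\<not> (\<exists>s. w = X # s @ [Y])" and i: "i < length w"
  shows "G q k (del i w) * qint q (2 * psum w i) = 0"
proof (cases "G q k (del i w) = 0")
  case True thus ?thesis by simp
next
  case False
  obtain t where d: "del i w = X # t @ [Y]" using G_form[OF False] by blast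
  have td: "tot (del i w) = 0" using G_tot False by blast
  have tk: "take i (del i w) = take i w" using take_del[OF i] .
  have dr: "drop i (del i w) = drop (Suc i) w" using i by (simp add: del_def)
  have ld: "Suc (length (del i w)) = length w" using length_del[OF i] .
  show ?thesis
  proof (cases "i = 0")
    case True thus ?thesis by simp
  next
    case i0: False
    show ?thesis
    proof (cases "Suc i = length w")
      case True
      have "psum w i = psum (del i w) i" using tk by (simp add: psum_def)
      also have "\<dots> = tot (del i w)"
      proof -
        have "i = length (del i w)" using ld True by simp
        thus ?thesis using psum_len[of "del i w"] by simp
      qed
      finally show ?thesis using td by simp
    next
      case False
      have h2: "drop (Suc i) w \<noteq> []" using False i by simp
      have dd: "del i w = take i w @ drop (Suc i) w" by (simp add: del_def)
      have "last (del i w) = Y" using d by simp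
      hence lY: "last (drop (Suc i) w) = Y" using dd h2 last_appendR by metis
      have "last w = last (take (Suc i) w @ drop (Suc i) w)" by simp
      hence wl: "last w = Y" using lY h2 last_appendR by metis
      have lw: "length w \<ge> 2" using i0 False i by linarith
      obtain a r where w: "w = a # r" using lw by (cases w) auto
      obtain i' where i': "i = Suc i'" using i0 by (cases i) auto
      have "del i w = a # del i' r" using w i' by (simp add: del_def)
      hence a: "a = X" using d by simp
      have "r \<noteq> []" using lw w by auto
      hence "r = butlast r @ [Y]" using wl w by (metis append_butlast_last_id last_ConsR)
      hence "w = X # butlast r @ [Y]" using w a by simp
      thus ?thesis using nf by blast
    qed
  qed
qed

lemma len_del2: "j < length s \<Longrightarrow> length (del j s) = length s - 1"
  by (simp add: del_def)

lemma id1: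
  fixes q :: "'a::field"
  assumes q0: "q \<noteq> 0" and z: "q - inverse q \<noteq> 0"
  shows "prep X (Cn q (Suc k)) w = (\<Sum>i<length w. if w ! i = X then G q k (del i w) * qint q (2 * psum w i) else 0)"
proof (cases "\<exists>s. w = X # s @ [Y]")
  case True
  then obtain s where w: "w = X # s @ [Y]" by blast
  let ?f = "\<lambda>i. if w ! i = X then G q k (del i w) * qint q (2 * psum w i) else 0"
  have "(\<Sum>i<length w. ?f i) = ?f 0 + (\<Sum>j<length s. ?f (Suc j)) + ?f (Suc (length s))"
    unfolding w by (rule sum_mid)
  also have "?f 0 = 0" by simp
  also have "?f (Suc (length s)) = 0" unfolding w last_facts by simp
  also have "(\<Sum>j<length s. ?f (Suc j)) = (\<Sum>j<length s. if s ! j = X then Cn q k (del j s) * qint q (2 + 2 * psum s j) else 0)"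
    by (rule sum.cong[OF refl]) (simp add: w del_mid psum_mid nth_append G_Cons algebra_simps)
  finally have R: "(\<Sum>i<length w. ?f i) = (\<Sum>j<length s. if s ! j = X then Cn q k (del j s) * qint q (2 + 2 * psum s j) else 0)"
    by simp
  have L: "prep X (Cn q (Suc k)) w = Cn q (Suc k) (s @ [Y])" by (simp add: w prep_def)
  show ?thesis
  proof (cases "length s = 2 * k + 1 \<and> tot s = 1")
    case True
    have "(\<Sum>j<length s. if s ! j = X then Cn q k (del j s) * qint q (2 + 2 * psum s j) else 0)
        = (\<Sum>j<length s. if s ! j = X then Pr q 1 (del j s) * qint q (2 + 2 * psum s j) else 0)"
      by (rule sum.cong[OF refl]) (use True in \<open>auto simp: Cn_Pr tot_del len_del2 bar_def\<close>)
    also have "\<dots> = Pr q 1 s * qint q (tot s)" by (rule core1[OF q0 z])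
    also have "\<dots> = Pr q 1 s" using True qint1[OF z] by simp
    finally have "(\<Sum>i<length w. ?f i) = Pr q 1 s" using R by simp
    moreover have "Cn q (Suc k) (s @ [Y]) = Pr q 1 s"
      using True qint1[OF z] by (simp add: Cn_Pr Pr_snoc tot_def bar_def)
    ultimately show ?thesis using L by simp
  next
    case False
    have "(\<Sum>j<length s. if s ! j = X then Cn q k (del j s) * qint q (2 + 2 * psum s j) else 0) = 0"
      by (rule sum.neutral) (use False in \<open>auto simp: Cn_Pr tot_del len_del2 bar_def\<close>)
    moreover have "Cn q (Suc k) (s @ [Y]) = 0"
      using False by (auto simp: Cn_Pr tot_def bar_def)
    ultimately show ?thesis using L R by simp
  qed
next
  case False
  have R: "(\<Sum>i<length w. if w ! i = X then G q k (del i w) * qint q (2 * psum w i) else 0) = 0"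
    by (rule sum.neutral) (use term_zero[OF False] in auto)
  have "prep X (Cn q (Suc k)) w = 0"
  proof (rule ccontr)
    assume nz: "prep X (Cn q (Suc k)) w \<noteq> 0"
    then obtain v where w: "w = X # v" and c: "Cn q (Suc k) v \<noteq> 0"
      by (auto simp: prep_def split: list.splits if_splits)
    have lv: "length v = 2 * Suc k" and tv: "tot v = 0" and P: "Pr q 1 v \<noteq> 0"
      using c by (auto simp: Cn_Pr split: if_splits)
    obtain v' e where v: "v = v' @ [e]" using lv by (cases v rule: rev_cases) auto
    show False
    proof (cases e)
      case X
      have "tot v' = -1" using tv v X by (simp add: tot_def bar_def)
      hence "Pr q 1 v' = 0" using Pr_zero[of "length v'" v' 1 q] psum_len[of v'] by simp
      thus False using P v by (simp add: Pr_snoc)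
    next
      case Y
      thus False using False w v by blast
    qed
  qed
  thus ?thesis using R by simp
qed

lemma id2:
  fixes q :: "'a::field"
  assumes q0: "q \<noteq> 0" and z: "q - inverse q \<noteq> 0"
  shows "(if w \<noteq> [] \<and> last w = Y then Cn q (Suc k) (butlast w) else 0) = (\<Sum>i<length w. if w ! i = Y then G q k (del i w) * qint q (2 * psum w i) else 0)"
proof (cases "\<exists>s. w = X # s @ [Y]")
  case True
  then obtain s where w: "w = X # s @ [Y]" by blast
  let ?f = "\<lambda>i. if w ! i = Y then G q k (del i w) * qint q (2 * psum w i) else 0"
  have "(\<Sum>i<length w. ?f i) = ?f 0 + (\<Sum>j<length s. ?f (Suc j)) + ?f (Suc (length s))"
    unfolding w by (rule sum_mid)
  also have "?f 0 = 0" by (simp add: w)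
  also have "?f (Suc (length s)) = 0" unfolding w last_facts using G_qint_tot[of q k "X # s"] by simp
  also have "(\<Sum>j<length s. ?f (Suc j)) = (\<Sum>j<length s. if s ! j = Y then Cn q k (del j s) * qint q (2 + 2 * psum s j) else 0)"
    by (rule sum.cong[OF refl]) (simp add: w del_mid psum_mid nth_append G_Cons algebra_simps)
  finally have R: "(\<Sum>i<length w. ?f i) = (\<Sum>j<length s. if s ! j = Y then Cn q k (del j s) * qint q (2 + 2 * psum s j) else 0)"
    by simp
  have L: "(if w \<noteq> [] \<and> last w = Y then Cn q (Suc k) (butlast w) else 0) = Cn q (Suc k) (X # s)"
    by (simp add: w butlast_append)
  show ?thesis
  proof (cases "length s = 2 * k + 1 \<and> tot s = -1")
    case True
    have "(\<Sum>j<length s. if s ! j = Y then Cn q k (del j s) * qint q (2 + 2 * psum s j) else 0)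
        = (\<Sum>j<length s. if s ! j = Y then Pr q 1 (del j s) * qint q (2 + 2 * psum s j) else 0)"
      by (rule sum.cong[OF refl]) (use True in \<open>auto simp: Cn_Pr tot_del len_del2 bar_def\<close>)
    also have "\<dots> = Pr q 2 s - Pr q 1 s * qint q (tot s + 2)" by (rule core2[OF q0 z])
    also have "Pr q 1 s = 0" using Pr_zero[of "length s" s 1 q] psum_len[of s] True by simp
    finally have "(\<Sum>i<length w. ?f i) = Pr q 2 s" using R by simp
    moreover have "Cn q (Suc k) (X # s) = Pr q 2 s"
      using True qint1[OF z] by (simp add: Cn_Pr Pr_Cons tot_def bar_def)
    ultimately show ?thesis using L by simp
  next
    case False
    have "(\<Sum>j<length s. if s ! j = Y then Cn q k (del j s) * qint q (2 + 2 * psum s j) else 0) = 0"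
      by (rule sum.neutral) (use False in \<open>auto simp: Cn_Pr tot_del len_del2 bar_def\<close>)
    moreover have "Cn q (Suc k) (X # s) = 0"
      using False by (auto simp: Cn_Pr tot_def bar_def)
    ultimately show ?thesis using L R by simp
  qed
next
  case False
  have R: "(\<Sum>i<length w. if w ! i = Y then G q k (del i w) * qint q (2 * psum w i) else 0) = 0"
    by (rule sum.neutral) (use term_zero[OF False] in auto)
  have "(if w \<noteq> [] \<and> last w = Y then Cn q (Suc k) (butlast w) else 0) = 0"
  proof (rule ccontr)
    assume nz: "(if w \<noteq> [] \<and> last w = Y then Cn q (Suc k) (butlast w) else 0) \<noteq> 0"
    then obtain v where w: "w = v @ [Y]" and c: "Cn q (Suc k) v \<noteq> 0"
      by (metis append_butlast_last_id)
    have lv: "length v = 2 * Suc k" and P: "Pr q 1 v \<noteq> 0"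
      using c by (auto simp: Cn_Pr split: if_splits)
    obtain v' e where v: "v = e # v'" using lv by (cases v) auto
    show False
    proof (cases e)
      case Y
      have "Pr q 0 v' = 0" using Pr_zero[of 0 v' 0 q] by simp
      thus False using P v Y by (simp add: Pr_Cons bar_def)
    next
      case X
      thus False using False w v by simp
    qed
  qed
  thus ?thesis using R by simp
qed

theorem lemma7p3:
  fixes q :: "'a::field_char_0" and k :: nat
  assumes "q \<noteq> 0" and "\<forall>n::nat. n > 0 \<longrightarrow> q ^ n \<noteq> 1"
  shows "conc (wd [X]) (Cn q (Suc k))
           = (\<lambda>w. (qshuffle q (wd [X]) (conc (wd [X]) (conc (Cn q k) (wd [Y]))) w
                 - qshuffle q (conc (wd [X]) (conc (Cn q k) (wd [Y]))) (wd [X]) w) / (q - inverse q))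
       \<and> conc (Cn q (Suc k)) (wd [Y])
           = (\<lambda>w. (qshuffle q (conc (wd [X]) (conc (Cn q k) (wd [Y]))) (wd [Y]) w
                 - qshuffle q (wd [Y]) (conc (wd [X]) (conc (Cn q k) (wd [Y]))) w) / (q - inverse q))"
proof -
  have q0: "q \<noteq> 0" using assms(1) .
  have z: "q - inverse q \<noteq> 0"
  proof
    assume "q - inverse q = 0"
    hence "q * q = 1" using q0 by (simp add: field_simps)
    hence "q ^ 2 = 1" by (simp add: power2_eq_square)
    thus False using assms(2) by auto
  qed
  have GG: "conc (wd [X]) (conc (Cn q k) (wd [Y])) = G q k" by (simp add: G_def)
  show ?thesis unfolding GG
  proof
    show "conc (wd [X]) (Cn q (Suc k)) = (\<lambda>w. (qshuffle q (wd [X]) (G q k) w - qshuffle q (G q k) (wd [X]) w) / (q - inverse q))"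
    proof
      fix w
      show "conc (wd [X]) (Cn q (Suc k)) w = (qshuffle q (wd [X]) (G q k) w - qshuffle q (G q k) (wd [X]) w) / (q - inverse q)"
        unfolding conc_wd_left RHS1[OF q0 z] by (rule id1[OF q0 z])
    qed
    show "conc (Cn q (Suc k)) (wd [Y]) = (\<lambda>w. (qshuffle q (G q k) (wd [Y]) w - qshuffle q (wd [Y]) (G q k) w) / (q - inverse q))"
    proof
      fix w
      show "conc (Cn q (Suc k)) (wd [Y]) w = (qshuffle q (G q k) (wd [Y]) w - qshuffle q (wd [Y]) (G q k) w) / (q - inverse q)"
        unfolding conc_wd_right RHS2[OF q0 z] by (rule id2[OF q0 z])
    qed
  qed
qed

end
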